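(* Let $d\geq1$ and $0<p,q,r<\infty$. Suppose there are constants $C$ and $\eta$ such that \[ \|\mathcal{A}_1(f, g-\tau_h g)\|_{L^r}\leq C |h|^\eta \|f\|_{L^p}\|g\|_{L^q} \] for all $f,g$ and uniformly over all $h\in\mathbb{R}^d$ with $|h|\le 1$. Then $\frac1p+\frac1q\ge\frac1r$.
   Context: $d\sigma$ is the normalized surface measure on $S^{2d-1}\subset\mathbb{R}^d\times\mathbb{R}^d$, $\mathcal{A}_1(f,g)(x)=\int_{S^{2d-1}} f(x-y)g(x-z)\,d\sigma(y,z)$, and $\tau_h g(x)=g(x-h)$. *)

theory Defs
  imports "HOL-Analysis.Analysis"
begin

text \<open>Normalized surface measure on the unit sphere of a Euclidean space, via the
  cone-measure formula: for the unit sphere the normalized surface measure of A equals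
  the normalized Lebesgue measure of the cone over A, hence
  integral of F w.r.t. sigma = (1/vol(B)) * integral over B of F(x/|x|) dx.\<close>
definition sphere_avg :: "('a::euclidean_space \<Rightarrow> real) \<Rightarrow> real" where
  "sphere_avg F = (\<integral>x\<in>ball 0 1. F (scaleR (1 / norm x) x) \<partial>lborel) / measure lborel (ball (0::'a) 1)"

definition A1 :: "(real^'n \<Rightarrow> real) \<Rightarrow> (real^'n \<Rightarrow> real) \<Rightarrow> real^'n \<Rightarrow> real" where
  "A1 f g x = sphere_avg (\<lambda>(y, z). f (x - y) * g (x - z))"

definition transl :: "real^'n \<Rightarrow> (real^'n \<Rightarrow> real) \<Rightarrow> real^'n \<Rightarrow> real" where
  "transl h g x = g (x - h)"

definition Lp_norm :: "real \<Rightarrow> (real^'n \<Rightarrow> real) \<Rightarrow> real" where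
  "Lp_norm p f = (\<integral>x. \<bar>f x\<bar> powr p \<partial>lborel) powr (1 / p)"

end

theory Submission
  imports Defs
begin

lemma transl_integral:
  fixes \<phi> :: "'a::euclidean_space \<Rightarrow> real"
  assumes [measurable]: "\<phi> \<in> borel_measurable borel"
  shows "integral\<^sup>L lborel (\<lambda>x. \<phi> (x - a)) = integral\<^sup>L lborel \<phi>"
proof -
  have "integral\<^sup>L lborel \<phi> = integral\<^sup>L (distr lborel borel ((+) (-a))) \<phi>"
    by (simp add: lborel_distr_plus)
  also have "\<dots> = integral\<^sup>L lborel (\<lambda>x. \<phi> (-a + x))"
    by (rule integral_distr) auto
  finally show ?thesis by simp
qed

lemma transl_integrable:
  fixes \<phi> :: "'a::euclidean_space \<Rightarrow> real"
  assumes [measurable]: "\<phi> \<in> borel_measurable borel" and "integrable lborel \<phi>"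
  shows "integrable lborel (\<lambda>x. \<phi> (x - a))"
proof -
  have "integrable (distr lborel borel ((+) (-a))) \<phi>"
    using assms by (simp add: lborel_distr_plus)
  then have "integrable lborel (\<lambda>x. \<phi> (-a + x))"
    by (subst (asm) integrable_distr_eq) auto
  then show ?thesis by simp
qed

lemma integrable_bdd:
  fixes \<phi> :: "'a::euclidean_space \<Rightarrow> real"
  assumes [measurable]: "\<phi> \<in> borel_measurable borel" and "\<And>x. \<bar>\<phi> x\<bar> \<le> M"
    and "\<And>x. R < norm x \<Longrightarrow> \<phi> x = 0"
  shows "integrable lborel \<phi>"
proof (rule Bochner_Integration.integrable_bound)
  show "integrable lborel (\<lambda>x. indicator (cball 0 R) x * M)"
    by (intro integrable_mult_left integrable_real_indicator emeasure_bounded_finite) auto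
  show "AE x in lborel. norm (\<phi> x) \<le> norm (indicator (cball 0 R) x * M)"
  proof (rule AE_I2)
    fix x
    have M: "0 \<le> M" using assms(2)[of 0] by linarith
    show "norm (\<phi> x) \<le> norm (indicator (cball 0 R) x * M)"
    proof (cases "norm x \<le> R")
      case True then show ?thesis using assms(2)[of x] M by (simp add: indicator_def)
    next
      case False then show ?thesis using assms(3)[of x] by simp
    qed
  qed
qed auto

lemma powr_sum_disj:
  fixes \<phi> :: "'i \<Rightarrow> real"
  assumes "finite I" "\<And>i j. i \<in> I \<Longrightarrow> j \<in> I \<Longrightarrow> i \<noteq> j \<Longrightarrow> \<phi> i = 0 \<or> \<phi> j = 0" "0 < r"
  shows "\<bar>\<Sum>i\<in>I. \<phi> i\<bar> powr r = (\<Sum>i\<in>I. \<bar>\<phi> i\<bar> powr r)"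
proof (cases "\<exists>i\<in>I. \<phi> i \<noteq> 0")
  case True
  then obtain i where i: "i \<in> I" "\<phi> i \<noteq> 0" by auto
  have z: "\<And>j. j \<in> I - {i} \<Longrightarrow> \<phi> j = 0" using assms(2) i by blast
  have "(\<Sum>i\<in>I. \<phi> i) = \<phi> i + (\<Sum>j\<in>I-{i}. \<phi> j)" using i assms(1) by (simp add: sum.remove)
  moreover have "(\<Sum>i\<in>I. \<bar>\<phi> i\<bar> powr r) = \<bar>\<phi> i\<bar> powr r + (\<Sum>j\<in>I-{i}. \<bar>\<phi> j\<bar> powr r)" using i assms(1) by (simp add: sum.remove)
  ultimately show ?thesis using z by simp
next
  case False then show ?thesis by simp
qed

definition uv :: "'a::real_normed_vector \<Rightarrow> 'a" where "uv w = scaleR (1 / norm w) w"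

lemma norm_uv: "norm (uv w) \<le> 1"
  by (simp add: uv_def)

lemma norm_fst_uv: "norm (fst (uv w)) \<le> 1"
  by (metis norm_uv norm_fst_le prod.collapse order_trans)

lemma norm_snd_uv: "norm (snd (uv w)) \<le> 1"
  by (metis norm_uv norm_snd_le prod.collapse order_trans)

lemma uv_meas[measurable]: "uv \<in> borel_measurable (borel :: 'a::euclidean_space measure)"
  unfolding uv_def by measurable


lemma mB_pos: "measure lborel (ball (0::(real^'n) \<times> (real^'n)) 1) > 0"
  using content_ball_pos[of 1 "0::(real^'n) \<times> (real^'n)"] by simp

lemma ball_meas[measurable]: "ball (0::'a::euclidean_space) 1 \<in> sets borel"
  by simp

lemma fst_meas[measurable]: "(fst :: ('a::euclidean_space \<times> 'b::euclidean_space) \<Rightarrow> 'a) \<in> borel_measurable borel"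
  by (intro borel_measurable_continuous_onI continuous_intros)

lemma snd_meas[measurable]: "(snd :: ('a::euclidean_space \<times> 'b::euclidean_space) \<Rightarrow> 'b) \<in> borel_measurable borel"
  by (intro borel_measurable_continuous_onI continuous_intros)

definition uf :: "('a::euclidean_space \<times> 'b::euclidean_space) \<Rightarrow> 'a" where "uf w = scaleR (1 / norm w) (fst w)"
definition us :: "('a::euclidean_space \<times> 'b::euclidean_space) \<Rightarrow> 'b" where "us w = scaleR (1 / norm w) (snd w)"

lemma uf_meas[measurable]: "uf \<in> borel_measurable borel"
  unfolding uf_def by measurable
lemma us_meas[measurable]: "us \<in> borel_measurable borel"
  unfolding us_def by measurable
lemma uf_eq: "uf w = fst (uv w)" by (simp add: uf_def uv_def)
lemma us_eq: "us w = snd (uv w)" by (simp add: us_def uv_def)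
lemma norm_uf: "norm (uf w) \<le> 1" by (simp add: uf_eq norm_fst_uv)
lemma norm_us: "norm (us w) \<le> 1" by (simp add: us_eq norm_snd_uv)

lemma A1_alt:
  fixes f g :: "real^'n \<Rightarrow> real"
  shows "A1 f g x = (\<integral>w. indicator (ball 0 1) w * (f (x - uf w) * g (x - us w)) \<partial>lborel) / measure lborel (ball (0::(real^'n) \<times> (real^'n)) 1)"
  unfolding A1_def sphere_avg_def set_lebesgue_integral_def uf_def us_def
  by (simp add: case_prod_beta)

lemma integrand_integrable:
  fixes f g :: "real^'n \<Rightarrow> real"
  assumes "continuous_on UNIV f" "continuous_on UNIV g" "\<And>u. \<bar>f u\<bar> \<le> a" "\<And>u. \<bar>g u\<bar> \<le> b"
  shows "integrable lborel (\<lambda>w::(real^'n) \<times> (real^'n). indicator (ball 0 1) w * (f (x - uf w) * g (x - us w)))"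
proof (rule integrable_bdd)
  have [measurable]: "f \<in> borel_measurable borel" "g \<in> borel_measurable borel"
    using assms borel_measurable_continuous_onI by auto
  show "(\<lambda>w::(real^'n) \<times> (real^'n). indicator (ball 0 1) w * (f (x - uf w) * g (x - us w))) \<in> borel_measurable borel"
    by measurable
  show "\<bar>indicator (ball 0 1) w * (f (x - uf w) * g (x - us w))\<bar> \<le> a * b" for w
    using assms(3)[of "x - uf w"] assms(4)[of "x - us w"]
    by (auto simp: indicator_def abs_mult intro: mult_mono order_trans[OF abs_ge_zero])
  show "1 < norm w \<Longrightarrow> indicator (ball 0 1) w * (f (x - uf w) * g (x - us w)) = 0" for w :: "(real^'n) \<times> (real^'n)"
    by (simp add: indicator_def)
qed

lemma A1_meas:
  fixes f g :: "real^'n \<Rightarrow> real"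
  assumes "continuous_on UNIV f" "continuous_on UNIV g"
  shows "A1 f g \<in> borel_measurable borel"
proof -
  have [measurable]: "f \<in> borel_measurable borel" "g \<in> borel_measurable borel"
    using assms borel_measurable_continuous_onI by auto
  have "(\<lambda>x. \<integral>w. indicator (ball 0 1) w * (f (x - uf w) * g (x - us w)) \<partial>lborel) \<in> borel_measurable (borel :: (real^'n) measure)"
    by measurable
  then show ?thesis unfolding A1_alt[abs_def] by measurable
qed

lemma A1_bound:
  fixes f g :: "real^'n \<Rightarrow> real"
  assumes "continuous_on UNIV f" "continuous_on UNIV g" "\<And>u. \<bar>f u\<bar> \<le> a" "\<And>u. \<bar>g u\<bar> \<le> b"
  shows "\<bar>A1 f g x\<bar> \<le> a * b"
proof -
  let ?m = "measure lborel (ball (0::(real^'n) \<times> (real^'n)) 1)"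
  have int2: "integrable lborel (\<lambda>w::(real^'n) \<times> (real^'n). indicator (ball 0 1) w * (a * b))"
    by (intro integrable_mult_left integrable_real_indicator emeasure_bounded_finite) auto
  have "norm (\<integral>w. indicator (ball 0 1) w * (f (x - uf w) * g (x - us w)) \<partial>lborel)
      \<le> (\<integral>w. indicator (ball (0::(real^'n) \<times> (real^'n)) 1) w * (a * b) \<partial>lborel)"
  proof (rule Bochner_Integration.integral_norm_bound_integral[OF integrand_integrable[OF assms] int2])
    fix w :: "(real^'n) \<times> (real^'n)"
    show "norm (indicator (ball 0 1) w * (f (x - uf w) * g (x - us w))) \<le> indicator (ball 0 1) w * (a * b)"
      using assms(3)[of "x - uf w"] assms(4)[of "x - us w"]
      by (auto simp: indicator_def abs_mult intro: mult_mono order_trans[OF abs_ge_zero])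
  qed
  also have "\<dots> = ?m * (a * b)"
    by (simp add: emeasure_bounded_finite)
  finally show ?thesis
    unfolding A1_alt using mB_pos[where 'n='n]
    by (simp add: divide_le_eq mult.commute)
qed

lemma A1_zero:
  fixes f g :: "real^'n \<Rightarrow> real"
  assumes "\<And>u. R \<le> norm u \<Longrightarrow> f u = 0" "R + 1 \<le> norm x"
  shows "A1 f g x = 0"
proof -
  have "f (x - uf w) = 0" for w :: "(real^'n) \<times> (real^'n)"
  proof (rule assms(1))
    have "norm x \<le> norm (x - uf w) + norm (uf w)" by (metis add.commute diff_add_cancel norm_triangle_ineq)
    then show "R \<le> norm (x - uf w)" using norm_uf[of w] assms(2) by linarith
  qed
  then show ?thesis unfolding A1_alt by simp
qed

lemma A1_one:
  fixes f g :: "real^'n \<Rightarrow> real"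
  assumes "\<And>y z. norm y \<le> 1 \<Longrightarrow> norm z \<le> 1 \<Longrightarrow> f (x - y) * g (x - z) = 1"
  shows "A1 f g x = 1"
proof -
  have "(\<lambda>w::(real^'n) \<times> (real^'n). indicator (ball 0 1) w * (f (x - uf w) * g (x - us w)))
      = indicator (ball 0 1)"
  proof
    fix w :: "(real^'n) \<times> (real^'n)"
    show "indicator (ball 0 1) w * (f (x - uf w) * g (x - us w)) = indicator (ball 0 1) w"
      using assms[OF norm_uf[of w] norm_us[of w]] by simp
  qed
  then show ?thesis unfolding A1_alt using mB_pos[where 'n='n]
    by (simp add: emeasure_bounded_finite)
qed

lemma A1_sum:
  fixes f g :: "real^'n \<Rightarrow> real" and A :: "nat \<Rightarrow> real^'n"
  assumes fg: "continuous_on UNIV f" "continuous_on UNIV g" "\<And>u. \<bar>f u\<bar> \<le> a" "\<And>u. \<bar>g u\<bar> \<le> b"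
    and cross: "\<And>i j y z. i < N \<Longrightarrow> j < N \<Longrightarrow> i \<noteq> j \<Longrightarrow> norm y \<le> 1 \<Longrightarrow> norm z \<le> 1 \<Longrightarrow>
       f (x - A i - y) * g (x - A j - z) = 0"
  shows "A1 (\<lambda>u. \<Sum>i<N. f (u - A i)) (\<lambda>u. \<Sum>i<N. g (u - A i)) x = (\<Sum>i<N. A1 f g (x - A i))"
proof -
  let ?m = "measure lborel (ball (0::(real^'n) \<times> (real^'n)) 1)"
  have pw: "indicator (ball 0 1) w * ((\<Sum>i<N. f (x - uf w - A i)) * (\<Sum>i<N. g (x - us w - A i)))
     = (\<Sum>i<N. indicator (ball 0 1) w * (f (x - A i - uf w) * g (x - A i - us w)))" for w :: "(real^'n) \<times> (real^'n)"
  proof -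
    have "(\<Sum>i<N. f (x - uf w - A i)) * (\<Sum>j<N. g (x - us w - A j))
        = (\<Sum>i<N. \<Sum>j<N. f (x - A i - uf w) * g (x - A j - us w))"
      unfolding sum_product
      by (intro sum.cong refl) (simp add: algebra_simps)
    also have "\<dots> = (\<Sum>i<N. f (x - A i - uf w) * g (x - A i - us w))"
    proof (rule sum.cong[OF refl])
      fix i assume i: "i \<in> {..<N}"
      have "(\<Sum>j<N. f (x - A i - uf w) * g (x - A j - us w))
          = (\<Sum>j<N. if j = i then f (x - A i - uf w) * g (x - A i - us w) else 0)"
        using i cross[of i _ "uf w" "us w", OF _ _ _ norm_uf norm_us] by (intro sum.cong refl) auto
      then show "(\<Sum>j<N. f (x - A i - uf w) * g (x - A j - us w)) = f (x - A i - uf w) * g (x - A i - us w)"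
        using i by simp
    qed
    finally show ?thesis by (simp add: sum_distrib_left)
  qed
  have "A1 (\<lambda>u. \<Sum>i<N. f (u - A i)) (\<lambda>u. \<Sum>i<N. g (u - A i)) x
      = (\<integral>w. (\<Sum>i<N. indicator (ball 0 1) w * (f (x - A i - uf w) * g (x - A i - us w))) \<partial>lborel) / ?m"
    unfolding A1_alt pw ..
  also have "\<dots> = (\<Sum>i<N. (\<integral>w. indicator (ball 0 1) w * (f (x - A i - uf w) * g (x - A i - us w)) \<partial>lborel)) / ?m"
    by (subst Bochner_Integration.integral_sum) (auto intro: integrand_integrable[OF fg])
  also have "\<dots> = (\<Sum>i<N. A1 f g (x - A i))"
    unfolding A1_alt by (simp add: sum_divide_distrib)
  finally show ?thesis .
qed

lemma Lp_sum_transl: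
  fixes \<phi> :: "real^'n \<Rightarrow> real" and A :: "nat \<Rightarrow> real^'n"
  assumes [measurable]: "\<phi> \<in> borel_measurable borel"
    and int: "integrable lborel (\<lambda>x. \<bar>\<phi> x\<bar> powr p)" and p: "0 < p"
    and supp: "\<And>u. R \<le> norm u \<Longrightarrow> \<phi> u = 0"
    and sep: "\<And>i j. i \<noteq> j \<Longrightarrow> 2 * R \<le> norm (A i - A j)"
  shows "Lp_norm p (\<lambda>x. \<Sum>i<N. \<phi> (x - A i)) = real N powr (1 / p) * Lp_norm p \<phi>"
proof -
  have pw: "\<bar>\<Sum>i<N. \<phi> (x - A i)\<bar> powr p = (\<Sum>i<N. \<bar>\<phi> (x - A i)\<bar> powr p)" for x
  proof (rule powr_sum_disj[OF _ _ p])
    fix i j :: nat assume "i \<noteq> j"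
    show "\<phi> (x - A i) = 0 \<or> \<phi> (x - A j) = 0"
    proof (rule ccontr)
      assume "\<not> ?thesis"
      then have "norm (x - A i) < R" "norm (x - A j) < R" using supp by (meson not_le)+
      moreover have "A i - A j = (x - A j) - (x - A i)" by simp
      then have "norm (A i - A j) \<le> norm (x - A j) + norm (x - A i)"
        using norm_triangle_ineq4[of "x - A j" "x - A i"] by simp
      ultimately show False using sep[OF \<open>i \<noteq> j\<close>] by linarith
    qed
  qed auto
  have m: "(\<lambda>x. \<bar>\<phi> x\<bar> powr p) \<in> borel_measurable borel" by measurable
  have "(\<integral>x. \<bar>\<Sum>i<N. \<phi> (x - A i)\<bar> powr p \<partial>lborel) = (\<Sum>i<N. \<integral>x. \<bar>\<phi> (x - A i)\<bar> powr p \<partial>lborel)"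
    unfolding pw
    by (rule Bochner_Integration.integral_sum) (rule transl_integrable[OF m int])
  also have "\<dots> = real N * (\<integral>x. \<bar>\<phi> x\<bar> powr p \<partial>lborel)"
    using transl_integral[OF m] by simp
  finally show ?thesis
    unfolding Lp_norm_def by (simp add: powr_mult integral_nonneg_AE)
qed

lemma final_ineq:
  fixes p q r K C P Q :: real
  assumes H: "\<And>N::nat. real N powr (1 / r) * K \<le> C * (real N powr (1 / p) * P) * (real N powr (1 / q) * Q)"
    and K: "0 < K" and pos: "0 < p" "0 < q" "0 < r"
  shows "1 / r \<le> 1 / p + 1 / q"
proof (rule ccontr)
  assume nt: "\<not> 1 / r \<le> 1 / p + 1 / q"
  define \<delta> where "\<delta> = 1 / r - (1 / p + 1 / q)"
  have d: "0 < \<delta>" using nt unfolding \<delta>_def by linarith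
  define M where "M = C * P * Q"
  define X where "X = \<bar>M\<bar> / K + 1"
  have X: "0 < X" unfolding X_def using K by (simp add: add_nonneg_pos)
  define N where "N = nat \<lceil>X powr (1 / \<delta>)\<rceil> + 1"
  have "N \<ge> 1" unfolding N_def by simp
  then have N1: "1 \<le> real N" by simp
  have "X powr (1 / \<delta>) \<le> real_of_int \<lceil>X powr (1 / \<delta>)\<rceil>" by (rule le_of_int_ceiling)
  also have "\<dots> \<le> real (nat \<lceil>X powr (1 / \<delta>)\<rceil>)" by simp
  also have "\<dots> \<le> real N" unfolding N_def by simp
  finally have NX: "X powr (1 / \<delta>) \<le> real N" .
  have "X = (X powr (1 / \<delta>)) powr \<delta>" using X d by (simp add: powr_powr)
  also have "\<dots> \<le> real N powr \<delta>" using NX d by (intro powr_mono2) auto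
  finally have XN: "X \<le> real N powr \<delta>" .
  let ?S = "real N powr (1 / p) * real N powr (1 / q)"
  have S: "0 < ?S" using N1 by simp
  have "real N powr (1 / r) = real N powr \<delta> * ?S"
    using N1 unfolding \<delta>_def by (simp add: powr_add[symmetric])
  then have "real N powr \<delta> * K * ?S \<le> M * ?S"
    using H[of N] unfolding M_def by (simp add: algebra_simps)
  then have "real N powr \<delta> * K \<le> M" using S by (meson mult_le_cancel_right_pos)
  moreover have "X * K \<le> real N powr \<delta> * K" using XN K by simp
  moreover have "X * K = \<bar>M\<bar> + K" unfolding X_def using K by (simp add: field_simps)
  ultimately show False using K by linarith
qed

definition psi :: "real \<Rightarrow> real" where "psi t = max 0 (min 1 (5 - t))"
definition f0 :: "real^'n \<Rightarrow> real" where "f0 u = psi (norm u)"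
definition g0 :: "real^'n \<Rightarrow> real^'n \<Rightarrow> real" where "g0 e u = (e \<bullet> u) * psi (norm u)"
definition gd :: "real^'n \<Rightarrow> real^'n \<Rightarrow> real" where "gd e u = g0 e u - g0 e (u - e)"

lemma psi_cont: "continuous_on UNIV psi"
  unfolding psi_def by (intro continuous_intros)

lemma f0_cont: "continuous_on UNIV f0"
  unfolding f0_def[abs_def] by (intro continuous_on_compose2[OF psi_cont] continuous_intros) auto

lemma g0_cont: "continuous_on UNIV (g0 e)"
  unfolding g0_def[abs_def] by (intro continuous_intros continuous_on_compose2[OF psi_cont]) auto

lemma gd_cont: "continuous_on UNIV (gd e)"
  unfolding gd_def[abs_def] by (intro continuous_intros continuous_on_compose2[OF g0_cont]) auto

lemma f0_bd: "\<bar>f0 u\<bar> \<le> 1" by (simp add: f0_def psi_def)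
lemma f0_supp: "5 \<le> norm u \<Longrightarrow> f0 u = 0" by (simp add: f0_def psi_def)
lemma f0_one: "norm u \<le> 4 \<Longrightarrow> f0 u = 1" by (simp add: f0_def psi_def)

lemma g0_supp: "5 \<le> norm u \<Longrightarrow> g0 e u = 0" by (simp add: g0_def psi_def)

lemma g0_bd: assumes "norm e = 1" shows "\<bar>g0 e u\<bar> \<le> 5"
proof (cases "5 \<le> norm u")
  case True then show ?thesis by (simp add: g0_supp)
next
  case False
  have "\<bar>e \<bullet> u\<bar> \<le> norm e * norm u" by (rule Cauchy_Schwarz_ineq2)
  then have a: "\<bar>e \<bullet> u\<bar> \<le> 5" using False assms by simp
  have b: "\<bar>psi (norm u)\<bar> \<le> 1" by (simp add: psi_def)
  have "\<bar>g0 e u\<bar> = \<bar>e \<bullet> u\<bar> * \<bar>psi (norm u)\<bar>" by (simp add: g0_def abs_mult)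
  also have "\<dots> \<le> 5 * 1" using a b by (intro mult_mono) auto
  finally show ?thesis by simp
qed

lemma g0_lin: "norm u \<le> 4 \<Longrightarrow> g0 e u = e \<bullet> u" by (simp add: g0_def psi_def)

lemma gd_bd: assumes "norm e = 1" shows "\<bar>gd e u\<bar> \<le> 10"
  using g0_bd[OF assms, of u] g0_bd[OF assms, of "u - e"] unfolding gd_def by linarith

lemma gd_supp: assumes "norm e = 1" "6 \<le> norm u" shows "gd e u = 0"
proof -
  have "norm u \<le> norm (u - e) + norm e" by (metis diff_add_cancel norm_triangle_ineq)
  then show ?thesis using assms by (simp add: gd_def g0_supp)
qed

lemma gd_one: assumes "norm e = 1" "norm u \<le> 3" shows "gd e u = 1"
proof -
  have "norm (u - e) \<le> norm u + norm e" by (rule norm_triangle_ineq4)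
  then have "g0 e (u - e) = e \<bullet> (u - e)" using assms by (intro g0_lin) simp
  moreover have "g0 e u = e \<bullet> u" using assms by (intro g0_lin) simp
  moreover have "e \<bullet> e = 1" using assms by (simp add: dot_square_norm)
  ultimately show ?thesis by (simp add: gd_def inner_diff_right)
qed

lemma A1_model:
  fixes e :: "real^'n"
  assumes e: "norm e = 1" and r: "0 < r"
  shows "A1 f0 (gd e) \<in> borel_measurable borel"
    and "\<And>u. 5 + 1 \<le> norm u \<Longrightarrow> A1 f0 (gd e) u = 0"
    and "integrable lborel (\<lambda>x. \<bar>A1 f0 (gd e) x\<bar> powr r)"
    and "0 < (\<integral>x. \<bar>A1 f0 (gd e) x\<bar> powr r \<partial>lborel)"
proof -
  show m[measurable]: "A1 f0 (gd e) \<in> borel_measurable borel" by (rule A1_meas[OF f0_cont gd_cont])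
  show z: "\<And>u. 5 + 1 \<le> norm u \<Longrightarrow> A1 f0 (gd e) u = 0" by (rule A1_zero[OF f0_supp])
  have bd: "\<bar>A1 f0 (gd e) x\<bar> \<le> 1 * 10" for x
    by (rule A1_bound[OF f0_cont gd_cont f0_bd gd_bd[OF e]])
  show int: "integrable lborel (\<lambda>x. \<bar>A1 f0 (gd e) x\<bar> powr r)"
  proof (rule integrable_bdd)
    show "(\<lambda>x. \<bar>A1 f0 (gd e) x\<bar> powr r) \<in> borel_measurable borel" by measurable
    show "\<bar>\<bar>A1 f0 (gd e) x\<bar> powr r\<bar> \<le> 10 powr r" for x
      using bd[of x] r by (simp add: powr_mono2)
    show "6 < norm x \<Longrightarrow> \<bar>A1 f0 (gd e) x\<bar> powr r = 0" for x
      using z[of x] by simp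
  qed
  have one: "A1 f0 (gd e) x = 1" if x: "norm x \<le> 1" for x
  proof (rule A1_one)
    fix y z :: "real^'n" assume yz: "norm y \<le> 1" "norm z \<le> 1"
    have "norm (x - y) \<le> norm x + norm y" "norm (x - z) \<le> norm x + norm z"
      by (rule norm_triangle_ineq4)+
    then show "f0 (x - y) * gd e (x - z) = 1"
      using x yz by (simp add: f0_one gd_one[OF e])
  qed
  have "0 < measure lborel (cball (0::real^'n) 1)" using content_cball_pos[of 1 "0::real^'n"] by simp
  also have "\<dots> = (\<integral>x. indicator (cball (0::real^'n) 1) x \<partial>lborel)" by simp
  also have "\<dots> \<le> (\<integral>x. \<bar>A1 f0 (gd e) x\<bar> powr r \<partial>lborel)"
  proof (rule integral_mono[OF _ int])
    show "integrable lborel (indicator (cball (0::real^'n) 1) :: real^'n \<Rightarrow> real)"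
      by (intro integrable_real_indicator emeasure_bounded_finite) auto
    show "indicator (cball 0 1) x \<le> \<bar>A1 f0 (gd e) x\<bar> powr r" for x :: "real^'n"
      using one[of x] by (auto simp: indicator_def)
  qed
  finally show "0 < (\<integral>x. \<bar>A1 f0 (gd e) x\<bar> powr r \<partial>lborel)" .
qed

lemma supp_sum_bounded:
  fixes \<phi> :: "real^'n \<Rightarrow> real" and A :: "nat \<Rightarrow> real^'n"
  assumes "\<And>u. R \<le> norm u \<Longrightarrow> \<phi> u = 0" "\<And>i. i < N \<Longrightarrow> norm (A i) \<le> B"
  shows "bounded {x. (\<Sum>i<N. \<phi> (x - A i)) \<noteq> 0}"
proof (rule bounded_subset[OF bounded_cball[of 0 "R + B"]])
  show "{x. (\<Sum>i<N. \<phi> (x - A i)) \<noteq> 0} \<subseteq> cball 0 (R + B)"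
  proof
    fix x assume "x \<in> {x. (\<Sum>i<N. \<phi> (x - A i)) \<noteq> 0}"
    then obtain i where i: "i < N" "\<phi> (x - A i) \<noteq> 0"
      by (auto dest: sum.not_neutral_contains_not_neutral)
    then have "norm (x - A i) < R" using assms(1) by (meson not_le)
    moreover have "norm x \<le> norm (x - A i) + norm (A i)" by (metis diff_add_cancel norm_triangle_ineq)
    ultimately show "x \<in> cball 0 (R + B)" using assms(2)[OF i(1)] by simp
  qed
qed

theorem proposition6p2:
  fixes p q r C \<eta> :: real
  assumes "0 < p" and "0 < q" and "0 < r"
    and "\<forall>(f :: real^'n \<Rightarrow> real) (g :: real^'n \<Rightarrow> real) (h :: real^'n).
           continuous_on UNIV f \<and> bounded {x. f x \<noteq> 0} \<and>
           continuous_on UNIV g \<and> bounded {x. g x \<noteq> 0} \<and> norm h \<le> 1 \<longrightarrow>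
           Lp_norm r (A1 f (\<lambda>x. g x - transl h g x))
             \<le> C * norm h powr \<eta> * Lp_norm p f * Lp_norm q g"
  shows "1 / p + 1 / q \<ge> 1 / r"
proof -
  obtain e :: "real^'n" where e: "norm e = 1" using vector_choose_size[of 1] by auto
  define A where "A i = (20 * real i) *\<^sub>R e" for i :: nat
  have sep: "20 \<le> norm (A i - A j)" if "i \<noteq> j" for i j
  proof -
    have "A i - A j = (20 * (real i - real j)) *\<^sub>R e" unfolding A_def by (simp add: algebra_simps)
    then have "norm (A i - A j) = \<bar>20 * (real i - real j)\<bar>" using e by (simp only: norm_scaleR)
    also have "\<dots> = 20 * \<bar>real i - real j\<bar>" by (simp only: abs_mult abs_numeral)
    finally have "norm (A i - A j) = 20 * \<bar>real i - real j\<bar>" .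
    moreover have "1 \<le> \<bar>real i - real j\<bar>" using that by linarith
    ultimately show ?thesis by simp
  qed
  have sepR: "2 * R \<le> norm (A i - A j)" if "i \<noteq> j" "R \<le> 10" for i j and R :: real
    using sep[OF that(1)] that(2) by linarith
  have nA: "norm (A i) \<le> 20 * real N" if "i < N" for i N
    using that e unfolding A_def by simp
  have [measurable]: "f0 \<in> borel_measurable borel" "g0 e \<in> borel_measurable borel"
    using borel_measurable_continuous_onI f0_cont g0_cont by auto
  note model = A1_model[OF e \<open>0 < r\<close>]
  have intf: "integrable lborel (\<lambda>x. \<bar>f0 x\<bar> powr p)"
  proof (rule integrable_bdd)
    show "(\<lambda>x. \<bar>f0 x\<bar> powr p) \<in> borel_measurable borel" by measurable
    show "\<bar>\<bar>f0 x\<bar> powr p\<bar> \<le> 1 powr p" for x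
      using f0_bd[of x] \<open>0 < p\<close> powr_mono2[of p "\<bar>f0 x\<bar>" 1] by simp
    show "5 < norm x \<Longrightarrow> \<bar>f0 x\<bar> powr p = 0" for x using f0_supp[of x] by simp
  qed
  have intg: "integrable lborel (\<lambda>x. \<bar>g0 e x\<bar> powr q)"
  proof (rule integrable_bdd)
    show "(\<lambda>x. \<bar>g0 e x\<bar> powr q) \<in> borel_measurable borel" by measurable
    show "\<bar>\<bar>g0 e x\<bar> powr q\<bar> \<le> 5 powr q" for x
      using g0_bd[OF e, of x] \<open>0 < q\<close> by (simp add: powr_mono2)
    show "5 < norm x \<Longrightarrow> \<bar>g0 e x\<bar> powr q = 0" for x using g0_supp[of x] by simp
  qed
  have H: "real N powr (1 / r) * Lp_norm r (A1 f0 (gd e))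
      \<le> C * (real N powr (1 / p) * Lp_norm p (f0 :: real^'n \<Rightarrow> real)) * (real N powr (1 / q) * Lp_norm q (g0 e))" for N :: nat
  proof -
    define F where "F u = (\<Sum>i<N. f0 (u - A i))" for u
    define G where "G u = (\<Sum>i<N. g0 e (u - A i))" for u
    have cF: "continuous_on UNIV F" unfolding F_def[abs_def]
      by (intro continuous_on_sum continuous_on_compose2[OF f0_cont] continuous_intros) auto
    have cG: "continuous_on UNIV G" unfolding G_def[abs_def]
      by (intro continuous_on_sum continuous_on_compose2[OF g0_cont] continuous_intros) auto
    have bF: "bounded {x. F x \<noteq> 0}" unfolding F_def
      by (rule supp_sum_bounded[OF f0_supp nA])
    have bG: "bounded {x. G x \<noteq> 0}" unfolding G_def
      by (rule supp_sum_bounded[OF g0_supp nA])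
    have main: "Lp_norm r (A1 F (\<lambda>x. G x - transl e G x)) \<le> C * norm e powr \<eta> * Lp_norm p F * Lp_norm q G"
      by (rule assms(4)[rule_format]) (use cF cG bF bG e in auto)
    have Gd: "(\<lambda>x. G x - transl e G x) = (\<lambda>u. \<Sum>i<N. gd e (u - A i))"
      unfolding G_def transl_def gd_def by (auto simp: fun_eq_iff sum_subtractf algebra_simps)
    have A1eq: "A1 F (\<lambda>x. G x - transl e G x) = (\<lambda>x. \<Sum>i<N. A1 f0 (gd e) (x - A i))"
    proof
      fix x
      show "A1 F (\<lambda>x. G x - transl e G x) x = (\<Sum>i<N. A1 f0 (gd e) (x - A i))"
        unfolding Gd F_def
      proof (rule A1_sum[OF f0_cont gd_cont f0_bd gd_bd[OF e]])
        fix i j :: nat and y z :: "real^'n"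
        assume ij: "i \<noteq> j" and yz: "norm y \<le> 1" "norm z \<le> 1"
        show "f0 (x - A i - y) * gd e (x - A j - z) = 0"
        proof (rule ccontr)
          assume "\<not> ?thesis"
          then have "f0 (x - A i - y) \<noteq> 0" "gd e (x - A j - z) \<noteq> 0" by auto
          then have "norm (x - A i - y) < 5" "norm (x - A j - z) < 6"
            using f0_supp gd_supp[OF e] by (meson not_le)+
          moreover have "norm (x - A i) \<le> norm (x - A i - y) + norm y"
            by (metis diff_add_cancel norm_triangle_ineq)
          moreover have "norm (x - A j) \<le> norm (x - A j - z) + norm z"
            by (metis diff_add_cancel norm_triangle_ineq)
          moreover have "A i - A j = (x - A j) - (x - A i)" by simp
          then have "norm (A i - A j) \<le> norm (x - A j) + norm (x - A i)"
            using norm_triangle_ineq4[of "x - A j" "x - A i"] by simp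
          ultimately show False using sep[OF ij] yz by linarith
        qed
      qed
    qed
    have LA: "Lp_norm r (A1 F (\<lambda>x. G x - transl e G x)) = real N powr (1 / r) * Lp_norm r (A1 f0 (gd e))"
      unfolding A1eq
      by (rule Lp_sum_transl[OF model(1) model(3) \<open>0 < r\<close> model(2)]) (auto intro!: sepR)
    have LF: "Lp_norm p F = real N powr (1 / p) * Lp_norm p (f0 :: real^'n \<Rightarrow> real)"
      unfolding F_def[abs_def]
      by (rule Lp_sum_transl[OF borel_measurable_continuous_onI[OF f0_cont] intf \<open>0 < p\<close> f0_supp]) (auto intro!: sepR)
    have LG: "Lp_norm q G = real N powr (1 / q) * Lp_norm q (g0 e)"
      unfolding G_def[abs_def]
      by (rule Lp_sum_transl[OF borel_measurable_continuous_onI[OF g0_cont] intg \<open>0 < q\<close> g0_supp]) (auto intro!: sepR)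
    show ?thesis using main unfolding LA LF LG using e by simp
  qed
  have K: "0 < Lp_norm r (A1 f0 (gd e))"
    unfolding Lp_norm_def using model(4) by simp
  show ?thesis using final_ineq[OF H K assms(1-3)] by simp
qed

end
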